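(* For every triangle $T$ (a set of three non-collinear points in some $\mathbb{R}^k$) there is $p_0(T)$ such that $T$ is Euclidean sub-$p$-toral for every prime $p\ge p_0(T)$.
   Context: A $p$-torus is a group isomorphic to $(\mathbb{Z}_p)^\alpha$ for some $\alpha\ge1$. A set $X\subset\mathbb{R}^k$ is Euclidean sub-$p$-toral if there exist $n\ge k$, a $p$-torus $G$ and an action of $G$ on $\mathbb{R}^n$ by isometries such that $X$ (viewed in $\mathbb{R}^n$ via the standard inclusion $\mathbb{R}^k\subset\mathbb{R}^n$) is contained in a single $G$-orbit. *)

theory Defs
  imports "HOL-Analysis.Analysis" "HOL-Algebra.Group_Action" "HOL-Algebra.Elementary_Groups"
          "HOL-Algebra.Product_Groups"
begin

text \<open>Points of R^n are represented as functions nat => real vanishing from index n on;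
  thus the standard inclusion R^k into R^n (k <= n) is the identity.\<close>

definition Rn :: "nat \<Rightarrow> (nat \<Rightarrow> real) set" where
  "Rn n = {x. \<forall>i\<ge>n. x i = 0}"

definition edist :: "nat \<Rightarrow> (nat \<Rightarrow> real) \<Rightarrow> (nat \<Rightarrow> real) \<Rightarrow> real" where
  "edist n x y = sqrt (\<Sum>i<n. (x i - y i)^2)"

text \<open>Collinearity, exactly as the library notion collinear (HOL-Analysis), written componentwise.\<close>
definition collinear_pts :: "(nat \<Rightarrow> real) set \<Rightarrow> bool" where
  "collinear_pts S \<longleftrightarrow> (\<exists>u. \<forall>x\<in>S. \<forall>y\<in>S. \<exists>c. \<forall>i. x i - y i = c * u i)"

definition p_torus :: "('a, 'b) monoid_scheme \<Rightarrow> nat \<Rightarrow> bool" where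
  "p_torus G p \<longleftrightarrow> group G \<and>
     (\<exists>\<alpha>::nat. \<alpha> \<ge> 1 \<and> G \<cong> product_group {..<\<alpha>} (\<lambda>_. integer_mod_group p))"

definition isometric_action :: "('a, 'b) monoid_scheme \<Rightarrow> nat \<Rightarrow> ('a \<Rightarrow> (nat \<Rightarrow> real) \<Rightarrow> (nat \<Rightarrow> real)) \<Rightarrow> bool" where
  "isometric_action G n \<phi> \<longleftrightarrow> group_action G (Rn n) \<phi> \<and>
     (\<forall>g\<in>carrier G. \<forall>x\<in>Rn n. \<forall>y\<in>Rn n. edist n (\<phi> g x) (\<phi> g y) = edist n x y)"

text \<open>Euclidean sub-p-toral sets of R^k. The group is taken with carrier type nat => int;
  since any p-torus is finite, every p-torus is isomorphic to such a group, so this loses nothing.\<close>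
definition sub_p_toral :: "nat \<Rightarrow> nat \<Rightarrow> (nat \<Rightarrow> real) set \<Rightarrow> bool" where
  "sub_p_toral p k X \<longleftrightarrow>
     (\<exists>n\<ge>k. \<exists>(G :: (nat \<Rightarrow> int) monoid) \<phi>. p_torus G p \<and> isometric_action G n \<phi> \<and>
        (\<exists>x\<in>Rn n. X \<subseteq> orbit G \<phi> x))"

end

theory Submission
  imports Defs "HOL-Real_Asymp.Real_Asymp"
begin

definition ip :: "nat \<Rightarrow> (nat \<Rightarrow> real) \<Rightarrow> (nat \<Rightarrow> real) \<Rightarrow> real" where
  "ip n x y = (\<Sum>i<n. x i * y i)"

definition hrefl :: "nat \<Rightarrow> (nat \<Rightarrow> real) \<Rightarrow> (nat \<Rightarrow> real) \<Rightarrow> (nat \<Rightarrow> real)" where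
  "hrefl n w z = (\<lambda>i. z i - 2 * ip n z w / ip n w w * w i)"

lemma ip_sym: "ip n x y = ip n y x"
  unfolding ip_def by (simp add: mult.commute)

lemma ip_diff_left: "ip n (\<lambda>i. x i - y i) z = ip n x z - ip n y z"
  unfolding ip_def by (simp add: algebra_simps sum_subtractf)

lemma ip_diff_right: "ip n z (\<lambda>i. x i - y i) = ip n z x - ip n z y"
  unfolding ip_def by (simp add: algebra_simps sum_subtractf)

lemma ip_add_left: "ip n (\<lambda>i. x i + y i) z = ip n x z + ip n y z"
  unfolding ip_def by (simp add: algebra_simps sum.distrib)

lemma ip_scale_left: "ip n (\<lambda>i. c * x i) z = c * ip n x z"
  unfolding ip_def by (simp add: algebra_simps sum_distrib_left)

lemma ip_scale_right: "ip n z (\<lambda>i. c * x i) = c * ip n z x"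
  unfolding ip_def by (simp add: algebra_simps sum_distrib_left)

lemma ip_nonneg: "ip n x x \<ge> 0"
  unfolding ip_def by (simp add: sum_nonneg)

lemma ip_zero: assumes "x \<in> Rn n" "ip n x x = 0" shows "x = (\<lambda>i. 0)"
proof
  fix i show "x i = 0"
  proof (cases "i < n")
    case True
    have "\<forall>j\<in>{..<n}. x j * x j = 0"
      using assms(2) unfolding ip_def by (subst sum_nonneg_eq_0_iff[symmetric]) auto
    then show ?thesis using True by auto
  next
    case False then show ?thesis using assms(1) by (auto simp: Rn_def)
  qed
qed

lemma edist_ip: "edist n x y = sqrt (ip n (\<lambda>i. x i - y i) (\<lambda>i. x i - y i))"
  unfolding edist_def ip_def by (simp add: power2_eq_square)

lemma hrefl_ip: "ip n (hrefl n w x) (hrefl n w y) = ip n x y"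
proof -
  have e: "hrefl n w x = (\<lambda>i. x i - (2 * ip n x w / ip n w w) * w i)" for x
    unfolding hrefl_def by simp
  show ?thesis
    unfolding e ip_diff_left ip_diff_right ip_scale_left ip_scale_right
    by (cases "ip n w w = 0") (auto simp: field_simps ip_sym)
qed

lemma hrefl_Rn: "w \<in> Rn n \<Longrightarrow> z \<in> Rn n \<Longrightarrow> hrefl n w z \<in> Rn n"
  unfolding hrefl_def Rn_def by auto

lemma hrefl_invol: "hrefl n w (hrefl n w x) = x"
proof -
  show ?thesis
  proof (cases "ip n w w = 0")
    case True then show ?thesis by (simp add: hrefl_def)
  next
    case False
    have "ip n (hrefl n w x) w = - ip n x w"
      unfolding hrefl_def ip_diff_left ip_scale_left using False
      by (auto simp: field_simps)
    then show ?thesis unfolding hrefl_def[of n w "hrefl n w x"]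
      by (auto simp: hrefl_def)
  qed
qed

lemma hrefl_diff: "hrefl n w (\<lambda>i. x i - y i) = (\<lambda>i. hrefl n w x i - hrefl n w y i)"
  unfolding hrefl_def ip_diff_left by (cases "ip n w w = 0") (auto simp: field_simps)

lemma hrefl_orth: "ip n z w = 0 \<Longrightarrow> hrefl n w z = z"
  unfolding hrefl_def by simp

lemma hrefl_swap:
  assumes "x \<in> Rn n" "y \<in> Rn n" "ip n x x = ip n y y"
  shows "hrefl n (\<lambda>i. x i - y i) x = y"
proof (cases "ip n (\<lambda>i. x i - y i) (\<lambda>i. x i - y i) = 0")
  case True
  have "(\<lambda>i. x i - y i) \<in> Rn n" using assms by (auto simp: Rn_def)
  from ip_zero[OF this True] have "\<And>i. x i - y i = 0" by (metis (no_types))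
  then have "x = y" by (simp add: fun_eq_iff)
  then show ?thesis by (simp add: hrefl_def ip_def)
next
  case False
  have *: "ip n (\<lambda>i. x i - y i) (\<lambda>i. x i - y i) = 2 * ip n x (\<lambda>i. x i - y i)"
    using assms(3) unfolding ip_diff_left ip_diff_right by (simp add: ip_sym)
  show ?thesis unfolding hrefl_def using False * by auto
qed

lemma generic_action:
  fixes G :: "'g monoid" and n :: nat
  assumes grp: "group G"
  and p1: "\<And>x. x\<in>Rn n \<Longrightarrow> \<psi> x \<in> Rn n" and p2: "\<And>x. x\<in>Rn n \<Longrightarrow> \<psi>i x \<in> Rn n"
  and p3: "\<And>x. x\<in>Rn n \<Longrightarrow> \<psi>i (\<psi> x) = x" and p4: "\<And>x. x\<in>Rn n \<Longrightarrow> \<psi> (\<psi>i x) = x"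
  and piso: "\<And>x y. x\<in>Rn n \<Longrightarrow> y\<in>Rn n \<Longrightarrow> edist n (\<psi> x) (\<psi> y) = edist n x y"
  and R1: "\<And>g x. g\<in>carrier G \<Longrightarrow> x\<in>Rn n \<Longrightarrow> R g x \<in> Rn n"
  and R2: "\<And>g h x. g\<in>carrier G \<Longrightarrow> h\<in>carrier G \<Longrightarrow> x\<in>Rn n \<Longrightarrow> R (g \<otimes>\<^bsub>G\<^esub> h) x = R g (R h x)"
  and R3: "\<And>x. x\<in>Rn n \<Longrightarrow> R \<one>\<^bsub>G\<^esub> x = x"
  and R4: "\<And>g x y. g\<in>carrier G \<Longrightarrow> x\<in>Rn n \<Longrightarrow> y\<in>Rn n \<Longrightarrow> edist n (R g x) (R g y) = edist n x y"
  shows "isometric_action G n (\<lambda>g. restrict (\<lambda>x. \<psi> (R g (\<psi>i x))) (Rn n))"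
proof -
  let ?S = "Rn n"
  let ?phi = "\<lambda>g. restrict (\<lambda>x. \<psi> (R g (\<psi>i x))) (Rn n)"
  have Bij: "?phi g \<in> Bij ?S" if g: "g \<in> carrier G" for g
  proof -
    have ig: "inv\<^bsub>G\<^esub> g \<in> carrier G" using grp g by (simp add: group.inv_closed)
    have "bij_betw (?phi g) ?S ?S"
    proof (rule bij_betw_byWitness[where f' = "?phi (inv\<^bsub>G\<^esub> g)"])
      show "\<forall>a\<in>?S. ?phi (inv\<^bsub>G\<^esub> g) (?phi g a) = a"
      proof
        fix a assume a: "a \<in> ?S"
        have "R (inv\<^bsub>G\<^esub> g) (R g (\<psi>i a)) = \<psi>i a"
          using R2[OF ig g p2[OF a]] R3[OF p2[OF a]] grp g by (simp add: group.l_inv)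
        then show "?phi (inv\<^bsub>G\<^esub> g) (?phi g a) = a"
          using a g ig p1 p2 p3 p4 R1 by simp
      qed
      show "\<forall>a\<in>?S. ?phi g (?phi (inv\<^bsub>G\<^esub> g) a) = a"
      proof
        fix a assume a: "a \<in> ?S"
        have "R g (R (inv\<^bsub>G\<^esub> g) (\<psi>i a)) = \<psi>i a"
          using R2[OF g ig p2[OF a]] R3[OF p2[OF a]] grp g by (simp add: group.r_inv)
        then show "?phi g (?phi (inv\<^bsub>G\<^esub> g) a) = a"
          using a g ig p1 p2 p3 p4 R1 by simp
      qed
      show "?phi g ` ?S \<subseteq> ?S" using g p1 p2 R1 by auto
      show "?phi (inv\<^bsub>G\<^esub> g) ` ?S \<subseteq> ?S" using ig p1 p2 R1 by auto
    qed
    then show ?thesis unfolding Bij_def by auto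
  qed
  have hom: "?phi \<in> hom G (BijGroup ?S)"
  proof (rule homI)
    show "?phi g \<in> carrier (BijGroup ?S)" if "g \<in> carrier G" for g
      using Bij[OF that] by (simp add: BijGroup_def)
    show "?phi (g \<otimes>\<^bsub>G\<^esub> h) = ?phi g \<otimes>\<^bsub>BijGroup ?S\<^esub> ?phi h"
      if g: "g \<in> carrier G" and h: "h \<in> carrier G" for g h
    proof -
      have "?phi g \<otimes>\<^bsub>BijGroup ?S\<^esub> ?phi h = compose ?S (?phi g) (?phi h)"
        using Bij[OF g] Bij[OF h] by (simp add: BijGroup_def)
      also have "\<dots> = ?phi (g \<otimes>\<^bsub>G\<^esub> h)"
      proof (rule ext)
        fix x show "compose ?S (?phi g) (?phi h) x = ?phi (g \<otimes>\<^bsub>G\<^esub> h) x"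
          using g h p1 p2 p3 p4 R1 R2 by (auto simp: compose_def)
      qed
      finally show ?thesis by simp
    qed
  qed
  have ga: "group_action G ?S ?phi"
    unfolding group_action_def group_hom_def group_hom_axioms_def
    using grp group_BijGroup hom by auto
  have "edist n (?phi g x) (?phi g y) = edist n x y"
    if "g\<in>carrier G" "x\<in>?S" "y\<in>?S" for g x y
  proof -
    have "edist n (?phi g x) (?phi g y) = edist n (R g (\<psi>i x)) (R g (\<psi>i y))"
      using that p2 R1 piso by simp
    also have "\<dots> = edist n (\<psi>i x) (\<psi>i y)" using that p2 R4 by simp
    also have "\<dots> = edist n (\<psi> (\<psi>i x)) (\<psi> (\<psi>i y))" using that p2 piso by simp
    also have "\<dots> = edist n x y" using that p4 by simp
    finally show ?thesis .
  qed
  then show ?thesis unfolding isometric_action_def using ga by auto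
qed

definition rot :: "nat \<Rightarrow> (nat \<Rightarrow> real) \<Rightarrow> (nat \<Rightarrow> real) \<Rightarrow> (nat \<Rightarrow> real)" where
  "rot d t z = (\<lambda>i.
     if i = d then cos (t 0) * z d - sin (t 0) * z (d+1)
     else if i = d+1 then sin (t 0) * z d + cos (t 0) * z (d+1)
     else if i = d+2 then cos (t 1) * z (d+2) - sin (t 1) * z (d+3)
     else if i = d+3 then sin (t 1) * z (d+2) + cos (t 1) * z (d+3)
     else if i = d+4 then cos (t 2) * z (d+4) - sin (t 2) * z (d+5)
     else if i = d+5 then sin (t 2) * z (d+4) + cos (t 2) * z (d+5)
     else z i)"

lemma rot_comp: "rot d t (rot d s z) = rot d (\<lambda>j. t j + s j) z"
  unfolding rot_def by (rule ext) (simp add: cos_add sin_add algebra_simps)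

lemma rot_cong: "(\<And>j. j < 3 \<Longrightarrow> cos (t j) = cos (s j) \<and> sin (t j) = sin (s j)) \<Longrightarrow> rot d t = rot d s"
proof -
  assume h: "\<And>j. j < 3 \<Longrightarrow> cos (t j) = cos (s j) \<and> sin (t j) = sin (s j)"
  have eqs: "cos (t 0) = cos (s 0)" "sin (t 0) = sin (s 0)" "cos (t 1) = cos (s 1)" "sin (t 1) = sin (s 1)"
     "cos (t 2) = cos (s 2)" "sin (t 2) = sin (s 2)" using h[of 0] h[of 1] h[of 2] by auto
  show ?thesis unfolding rot_def eqs by (rule refl)
qed

lemma rot_zero: "rot d (\<lambda>j. 0) z = z"
  unfolding rot_def by (rule ext) simp

lemma rot_Rn: "z \<in> Rn (d+6) \<Longrightarrow> rot d t z \<in> Rn (d+6)"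
  unfolding rot_def Rn_def by auto

lemma sum6: fixes d :: nat shows "(\<Sum>i<d+6. f i) = (\<Sum>i<d. f i) + f d + f (d+1) + f (d+2) + f (d+3) + f (d+4) + f (d+5)"
proof -
  have e: "d + 6 = Suc (Suc (Suc (Suc (Suc (Suc d)))))" by simp
  show ?thesis unfolding e by (simp add: sum.lessThan_Suc add.assoc eval_nat_numeral)
qed

lemma rot_pair: "(c * x1 - s * x2 - (c * y1 - s * y2))\<^sup>2 + (s * x1 + c * x2 - (s * y1 + c * y2))\<^sup>2
   = (x1 - y1)\<^sup>2 + (x2 - y2)\<^sup>2" if "s\<^sup>2 + c\<^sup>2 = 1" for c s x1 x2 y1 y2 :: real
proof -
  have "(c * x1 - s * x2 - (c * y1 - s * y2))\<^sup>2 + (s * x1 + c * x2 - (s * y1 + c * y2))\<^sup>2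
     = (s\<^sup>2 + c\<^sup>2) * ((x1 - y1)\<^sup>2 + (x2 - y2)\<^sup>2)" by (simp add: power2_eq_square algebra_simps)
  then show ?thesis using that by simp
qed

lemma rot_edist: "edist (d+6) (rot d t x) (rot d t y) = edist (d+6) x y"
proof -
  have "(\<Sum>i<d. (rot d t x i - rot d t y i)\<^sup>2) = (\<Sum>i<d. (x i - y i)\<^sup>2)"
    by (rule sum.cong) (auto simp: rot_def)
  then show ?thesis unfolding edist_def sum6
    by (simp add: rot_def rot_pair add.assoc)
qed

definition ang :: "nat \<Rightarrow> (nat \<Rightarrow> int) \<Rightarrow> nat \<Rightarrow> real" where
  "ang p g = (\<lambda>j. 2 * pi * of_int (g j) / real p)"

lemma cos_sin_shift: "cos (x - 2 * pi * of_int q) = cos x \<and> sin (x - 2 * pi * of_int q) = sin x"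
  by (simp add: cos_diff sin_diff)

lemma mod_angle:
  assumes "p > 0"
  shows "cos (2 * pi * of_int ((a + b) mod int p) / real p) = cos (2 * pi * of_int a / real p + 2 * pi * of_int b / real p)
       \<and> sin (2 * pi * of_int ((a + b) mod int p) / real p) = sin (2 * pi * of_int a / real p + 2 * pi * of_int b / real p)"
proof -
  define q where "q = (a + b) div int p"
  have "(a + b) mod int p = a + b - int p * q" unfolding q_def by (simp add: minus_div_mult_eq_mod[symmetric])
  then have M: "real_of_int ((a + b) mod int p) = real_of_int a + real_of_int b - real p * real_of_int q"
    by simp
  have "2 * pi * of_int ((a + b) mod int p) / real p = 2 * pi * (real_of_int a + real_of_int b - real p * real_of_int q) / real p"
    by (simp only: M)
  also have "\<dots> = (2 * pi * of_int a / real p + 2 * pi * of_int b / real p) - 2 * pi * of_int q"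
    using assms by (simp add: field_simps)
  finally have "2 * pi * of_int ((a + b) mod int p) / real p = (2 * pi * of_int a / real p + 2 * pi * of_int b / real p) - 2 * pi * of_int q" .
  then show ?thesis using cos_sin_shift by metis
qed

definition Gp :: "nat \<Rightarrow> (nat \<Rightarrow> int) monoid" where
  "Gp p = product_group {..<3::nat} (\<lambda>_. integer_mod_group p)"

definition psi where
  "psi n a x0 w1 w2 x = (\<lambda>i. a i + hrefl n w2 (hrefl n w1 (\<lambda>i. x i - x0 i)) i)"
definition psii where
  "psii n a x0 w1 w2 y = (\<lambda>i. x0 i + hrefl n w1 (hrefl n w2 (\<lambda>i. y i - a i)) i)"

definition act where
  "act p d a x0 w1 w2 = (\<lambda>g. restrict (\<lambda>x. psi (d+6) a x0 w1 w2 (rot d (ang p g) (psii (d+6) a x0 w1 w2 x))) (Rn (d+6)))"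

lemma Rn_diff: "x \<in> Rn n \<Longrightarrow> y \<in> Rn n \<Longrightarrow> (\<lambda>i. x i - y i) \<in> Rn n"
  and Rn_add: "x \<in> Rn n \<Longrightarrow> y \<in> Rn n \<Longrightarrow> (\<lambda>i. x i + y i) \<in> Rn n"
  unfolding Rn_def by auto

lemma group_Gp: "group (Gp p)"
  unfolding Gp_def by simp

lemma p_torus_Gp: "p_torus (Gp p) p"
  unfolding p_torus_def using group_Gp by (auto simp: Gp_def intro!: exI[of _ 3])

lemma act_isometric:
  assumes p: "p > 0" and a: "a \<in> Rn (d+6)" and x0: "x0 \<in> Rn (d+6)"
    and w1: "w1 \<in> Rn (d+6)" and w2: "w2 \<in> Rn (d+6)"
  shows "isometric_action (Gp p) (d+6) (act p d a x0 w1 w2)"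
  unfolding act_def
proof (rule generic_action[OF group_Gp, where \<psi>="psi (d+6) a x0 w1 w2" and \<psi>i="psii (d+6) a x0 w1 w2" and R="\<lambda>g. rot d (ang p g)"])
  let ?n = "d+6"
  show "psi ?n a x0 w1 w2 x \<in> Rn ?n" if "x \<in> Rn ?n" for x
    unfolding psi_def using that a x0 w1 w2 by (intro Rn_add hrefl_Rn Rn_diff) auto
  show "psii ?n a x0 w1 w2 x \<in> Rn ?n" if "x \<in> Rn ?n" for x
    unfolding psii_def using that a x0 w1 w2 by (intro Rn_add hrefl_Rn Rn_diff) auto
  show "psii ?n a x0 w1 w2 (psi ?n a x0 w1 w2 x) = x" for x
    unfolding psi_def psii_def by (simp add: hrefl_invol)
  show "psi ?n a x0 w1 w2 (psii ?n a x0 w1 w2 x) = x" for x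
    unfolding psi_def psii_def by (simp add: hrefl_invol)
  show "edist ?n (psi ?n a x0 w1 w2 x) (psi ?n a x0 w1 w2 y) = edist ?n x y" for x y
  proof -
    have "(\<lambda>i. psi ?n a x0 w1 w2 x i - psi ?n a x0 w1 w2 y i)
       = hrefl ?n w2 (hrefl ?n w1 (\<lambda>i. x i - y i))"
    proof -
      have "(\<lambda>i. x i - y i) = (\<lambda>i. (x i - x0 i) - (y i - x0 i))" by simp
      then show ?thesis unfolding psi_def
        by (simp only: hrefl_diff) simp
    qed
    then show ?thesis unfolding edist_ip by (simp add: hrefl_ip)
  qed
  show "rot d (ang p g) x \<in> Rn ?n" if "x \<in> Rn ?n" for g x
    using rot_Rn that by blast
  show "edist ?n (rot d (ang p g) x) (rot d (ang p g) y) = edist ?n x y" for g x y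
    by (rule rot_edist)
  show "rot d (ang p \<one>\<^bsub>Gp p\<^esub>) x = x" for x
  proof -
    have "rot d (ang p \<one>\<^bsub>Gp p\<^esub>) = rot d (\<lambda>j. 0)"
      by (rule rot_cong) (simp add: Gp_def ang_def)
    then show ?thesis by (simp add: rot_zero)
  qed
  show "rot d (ang p (g \<otimes>\<^bsub>Gp p\<^esub> h)) x = rot d (ang p g) (rot d (ang p h) x)"
    if "g \<in> carrier (Gp p)" "h \<in> carrier (Gp p)" for g h x
  proof -
    have "rot d (ang p (g \<otimes>\<^bsub>Gp p\<^esub> h)) = rot d (\<lambda>j. ang p g j + ang p h j)"
      by (rule rot_cong) (simp add: Gp_def ang_def mod_angle[OF p])
    then show ?thesis by (simp add: rot_comp)
  qed
qed

lemma hrefl_zero: "hrefl n w (\<lambda>i. 0) = (\<lambda>i. 0)"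
  unfolding hrefl_def ip_def by simp

lemma Rn_mono: "x \<in> Rn d \<Longrightarrow> x \<in> Rn (d+6)"
  unfolding Rn_def by auto

lemma model_sub_toral:
  fixes d p :: nat and a b c x0 :: "nat \<Rightarrow> real" and g1 g2 :: "nat \<Rightarrow> int"
  defines "n \<equiv> d + 6"
  defines "U \<equiv> (\<lambda>i. rot d (ang p g1) x0 i - x0 i)"
  defines "V \<equiv> (\<lambda>i. rot d (ang p g2) x0 i - x0 i)"
  defines "u \<equiv> (\<lambda>i. b i - a i)"
  defines "v \<equiv> (\<lambda>i. c i - a i)"
  assumes p: "p > 0" and abc: "a \<in> Rn d" "b \<in> Rn d" "c \<in> Rn d" and x0: "x0 \<in> Rn n"
    and g: "g1 \<in> carrier (Gp p)" "g2 \<in> carrier (Gp p)"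
    and gram: "ip n U U = ip n u u" "ip n V V = ip n v v" "ip n U V = ip n u v"
  shows "sub_p_toral p d {a, b, c}"
proof -
  have a: "a \<in> Rn n" and b: "b \<in> Rn n" and c: "c \<in> Rn n" using abc Rn_mono n_def by auto
  have U: "U \<in> Rn n" unfolding U_def n_def using x0 n_def by (intro Rn_diff rot_Rn) auto
  have V: "V \<in> Rn n" unfolding V_def n_def using x0 n_def by (intro Rn_diff rot_Rn) auto
  have u: "u \<in> Rn n" unfolding u_def using b a by (rule Rn_diff)
  have v: "v \<in> Rn n" unfolding v_def using c a by (rule Rn_diff)
  define w1 where "w1 = (\<lambda>i. U i - u i)"
  have w1: "w1 \<in> Rn n" unfolding w1_def using U u by (rule Rn_diff)
  have H1U: "hrefl n w1 U = u" unfolding w1_def using U u gram(1) by (rule hrefl_swap)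
  define V' where "V' = hrefl n w1 V"
  have V': "V' \<in> Rn n" unfolding V'_def using w1 V by (rule hrefl_Rn)
  have V'n: "ip n V' V' = ip n v v" unfolding V'_def hrefl_ip using gram(2) .
  have uV': "ip n u V' = ip n u v"
  proof -
    have "ip n u V' = ip n (hrefl n w1 U) (hrefl n w1 V)" unfolding V'_def H1U ..
    also have "\<dots> = ip n U V" by (rule hrefl_ip)
    finally show ?thesis using gram(3) by simp
  qed
  define w2 where "w2 = (\<lambda>i. V' i - v i)"
  have w2: "w2 \<in> Rn n" unfolding w2_def using V' v by (rule Rn_diff)
  have H2V': "hrefl n w2 V' = v" unfolding w2_def using V' v V'n by (rule hrefl_swap)
  have H2u: "hrefl n w2 u = u"
    by (rule hrefl_orth) (simp add: w2_def ip_diff_right uV')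
  let ?phi = "act p d a x0 w1 w2"
  have iso: "isometric_action (Gp p) n ?phi"
    unfolding n_def using act_isometric p a x0 w1 w2 n_def by blast
  have psii_a: "psii n a x0 w1 w2 a = x0"
    unfolding psii_def by (simp add: hrefl_zero)
  have orb: "?phi g a = (\<lambda>i. a i + hrefl n w2 (hrefl n w1 (\<lambda>i. rot d (ang p g) x0 i - x0 i)) i)" for g
    using a unfolding act_def n_def[symmetric] by (simp add: psii_a psi_def)
  have "a \<in> orbit (Gp p) ?phi a"
  proof -
    have "?phi \<one>\<^bsub>Gp p\<^esub> a = a"
    proof -
      have "rot d (ang p \<one>\<^bsub>Gp p\<^esub>) = rot d (\<lambda>j. 0)"
        by (rule rot_cong) (simp add: Gp_def ang_def)
      then show ?thesis unfolding orb by (simp add: rot_zero hrefl_zero)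
    qed
    moreover have "\<one>\<^bsub>Gp p\<^esub> \<in> carrier (Gp p)" by (simp add: group.is_monoid group_Gp monoid.one_closed)
    ultimately show ?thesis unfolding orbit_def by force
  qed
  moreover have "b \<in> orbit (Gp p) ?phi a"
  proof -
    have "?phi g1 a = b" unfolding orb U_def[symmetric] H1U H2u by (simp add: u_def)
    then show ?thesis using g unfolding orbit_def by force
  qed
  moreover have "c \<in> orbit (Gp p) ?phi a"
  proof -
    have "?phi g2 a = c" unfolding orb V_def[symmetric] V'_def[symmetric] H2V' by (simp add: v_def)
    then show ?thesis using g unfolding orbit_def by force
  qed
  ultimately show ?thesis unfolding sub_p_toral_def using iso a p_torus_Gp n_def
    by (intro exI[of _ n]) (auto simp: Gp_def intro!: exI[of _ "Gp p"] exI[of _ ?phi])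
qed

definition Q :: "real \<Rightarrow> real \<Rightarrow> real" where
  "Q x y = (cos x - 1) * (cos y - 1) + sin x * sin y"

lemma gram_model:
  fixes d :: nat and t s :: "nat \<Rightarrow> real" and r0 r1 r2 :: real
  defines "x0 \<equiv> (\<lambda>i. if i = d then r0 else if i = d+2 then r1 else if i = d+4 then r2 else 0)"
  shows "ip (d+6) (\<lambda>i. rot d t x0 i - x0 i) (\<lambda>i. rot d s x0 i - x0 i)
     = r0\<^sup>2 * Q (t 0) (s 0) + r1\<^sup>2 * Q (t 1) (s 1) + r2\<^sup>2 * Q (t 2) (s 2)"
proof -
  have "(\<Sum>i<d. (rot d t x0 i - x0 i) * (rot d s x0 i - x0 i)) = 0"
    by (rule sum.neutral) (auto simp: rot_def x0_def)
  then show ?thesis unfolding ip_def sum6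
    by (simp add: rot_def x0_def Q_def power2_eq_square algebra_simps)
qed

lemma model2:
  fixes d p :: nat and a b c :: "nat \<Rightarrow> real" and e1 e2 :: int and r0 r1 r2 :: real
  defines "\<theta> \<equiv> 2 * pi / real p"
  assumes p: "p > 1" and abc: "a \<in> Rn d" "b \<in> Rn d" "c \<in> Rn d"
    and e: "0 \<le> e1" "e1 < int p" "0 \<le> e2" "e2 < int p"
    and eqs: "r0\<^sup>2 * Q \<theta> \<theta> + r2\<^sup>2 * Q (\<theta> * e1) (\<theta> * e1) = ip (d+6) (\<lambda>i. b i - a i) (\<lambda>i. b i - a i)"
      "r1\<^sup>2 * Q \<theta> \<theta> + r2\<^sup>2 * Q (\<theta> * e2) (\<theta> * e2) = ip (d+6) (\<lambda>i. c i - a i) (\<lambda>i. c i - a i)"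
      "r2\<^sup>2 * Q (\<theta> * e1) (\<theta> * e2) = ip (d+6) (\<lambda>i. b i - a i) (\<lambda>i. c i - a i)"
  shows "sub_p_toral p d {a, b, c}"
proof -
  define x0 where "x0 = (\<lambda>i::nat. if i = d then r0 else if i = d+2 then r1 else if i = d+4 then r2 else 0)"
  define g1 where "g1 = (\<lambda>j\<in>{..<3::nat}. if j = 0 then 1 else if j = 1 then 0 else e1)"
  define g2 where "g2 = (\<lambda>j\<in>{..<3::nat}. if j = 0 then 0 else if j = 1 then 1 else e2)"
  have x0: "x0 \<in> Rn (d+6)" unfolding x0_def Rn_def by auto
  have g: "g1 \<in> carrier (Gp p)" "g2 \<in> carrier (Gp p)"
    using p e by (auto simp: Gp_def g1_def g2_def carrier_integer_mod_group)
  have Q0: "Q x 0 = 0" "Q 0 x = 0" for x by (auto simp: Q_def)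
  have a1: "ang p g1 0 = \<theta>" "ang p g1 (Suc 0) = 0" "ang p g1 2 = \<theta> * e1"
    by (auto simp: ang_def g1_def \<theta>_def)
  have a2: "ang p g2 0 = 0" "ang p g2 (Suc 0) = \<theta>" "ang p g2 2 = \<theta> * e2"
    by (auto simp: ang_def g2_def \<theta>_def)
  show ?thesis
    by (rule model_sub_toral[OF _ abc x0 g]) (use p eqs in \<open>simp_all add: x0_def gram_model a1 a2 Q0\<close>)
qed

lemma ev_seq:
  assumes "eventually P (at_right (0::real))"
  shows "\<exists>N. \<forall>p\<ge>N. P (2 * pi / real p)"
proof -
  have "filterlim (\<lambda>p::nat. 2*pi/real p) (at_right 0) sequentially"
    by real_asymp
  then have "eventually (\<lambda>p. P (2 * pi / real p)) sequentially"
    by (rule eventually_compose_filterlim[OF assms])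
  then show ?thesis by (simp add: eventually_sequentially)
qed

lemma Qdiag: "Q x x = 2 - 2 * cos x"
proof -
  have "Q x x = (sin x)\<^sup>2 + (cos x)\<^sup>2 + 1 - 2 * cos x" unfolding Q_def by (simp add: power2_eq_square algebra_simps)
  then show ?thesis by simp
qed
lemma div_neg: "F / (t::real)\<^sup>2 < 0 \<Longrightarrow> F < 0"
proof (rule ccontr)
  assume "F / t\<^sup>2 < 0" "\<not> F < 0"
  then have "F / t\<^sup>2 \<ge> 0" by (intro divide_nonneg_nonneg) auto
  then show False using \<open>F / t\<^sup>2 < 0\<close> by simp
qed
lemma div_pos: "F / (t::real)\<^sup>2 > 0 \<Longrightarrow> F > 0"
proof (rule ccontr)
  assume "F / t\<^sup>2 > 0" "\<not> F > 0"
  then have "F / t\<^sup>2 \<le> 0" by (simp add: divide_nonpos_nonneg)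
  then show False using \<open>F / t\<^sup>2 > 0\<close> by simp
qed

lemma numeric:
  fixes A B g :: real
  assumes A: "A \<ge> 0" and B: "B \<ge> 0" and gA: "g < A" and gB: "g < B" and gAB: "g\<^sup>2 < A * B"
  shows "\<exists>p0. \<forall>p\<ge>p0. p > 1 \<and> (\<exists>e1 e2 r0 r1 r2. 0 \<le> e1 \<and> e1 < int p \<and> 0 \<le> e2 \<and> e2 < int p \<and>
     r0\<^sup>2 * Q (2*pi/real p) (2*pi/real p) + r2\<^sup>2 * Q (2*pi/real p * e1) (2*pi/real p * e1) = A \<and>
     r1\<^sup>2 * Q (2*pi/real p) (2*pi/real p) + r2\<^sup>2 * Q (2*pi/real p * e2) (2*pi/real p * e2) = B \<and>
     r2\<^sup>2 * Q (2*pi/real p * e1) (2*pi/real p * e2) = g)"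
proof -
  have L1: "((\<lambda>t::real. (2 - 2*cos t) / t^2) \<longlongrightarrow> 1) (at_right 0)"
    by real_asymp
  have E1: "eventually (\<lambda>t::real. (2 - 2*cos t) / t^2 > 0) (at_right 0)"
    using order_tendstoD(1)[OF L1] by simp
  show ?thesis
  proof (cases "g \<ge> 0")
    case True
    obtain N where N: "\<forall>p\<ge>N. (2 - 2*cos (2 * pi / real p)) / (2 * pi / real p)^2 > 0"
      using ev_seq[OF E1] by blast
    show ?thesis
    proof (intro exI[of _ "max N 2"] allI impI conjI)
      fix p assume p: "max N 2 \<le> p"
      then have "2 \<le> p" by (meson max.boundedE)
      then show "p > 1" by simp
      define \<theta> where "\<theta> = 2 * pi / real p"
      define f where "f = 2 - 2 * cos \<theta>"
      have "N \<le> p" using p by (meson max.boundedE)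
      from div_pos[OF N[rule_format, OF this]] have f: "f > 0" unfolding f_def \<theta>_def .
      define r0 where "r0 = sqrt ((A - g) / f)"
      define r1 where "r1 = sqrt ((B - g) / f)"
      define r2 where "r2 = sqrt (g / f)"
      have r: "r0\<^sup>2 = (A - g) / f" "r1\<^sup>2 = (B - g) / f" "r2\<^sup>2 = g / f"
        unfolding r0_def r1_def r2_def using f gA gB True
        by (simp_all add: real_sqrt_pow2 divide_nonneg_pos)
      have Qf: "Q \<theta> \<theta> = f" unfolding f_def Qdiag ..
      show "\<exists>e1 e2 r0 r1 r2. 0 \<le> e1 \<and> e1 < int p \<and> 0 \<le> e2 \<and> e2 < int p \<and>
        r0\<^sup>2 * Q (2*pi/real p) (2*pi/real p) + r2\<^sup>2 * Q (2*pi/real p * e1) (2*pi/real p * e1) = A \<and>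
        r1\<^sup>2 * Q (2*pi/real p) (2*pi/real p) + r2\<^sup>2 * Q (2*pi/real p * e2) (2*pi/real p * e2) = B \<and>
        r2\<^sup>2 * Q (2*pi/real p * e1) (2*pi/real p * e2) = g"
        apply (rule exI[of _ 1], rule exI[of _ 1], rule exI[of _ r0], rule exI[of _ r1], rule exI[of _ r2])
        unfolding \<theta>_def[symmetric] Qf r
      proof (intro conjI)
        show "0 \<le> (1::int)" "(1::int) < int p" "0 \<le> (1::int)" "(1::int) < int p" using \<open>2 \<le> p\<close> by auto
        show "(A - g) / f * f + g / f * Q (\<theta> * real_of_int 1) (\<theta> * real_of_int 1) = A"
          using f by (simp add: Qf)
        show "(B - g) / f * f + g / f * Q (\<theta> * real_of_int 1) (\<theta> * real_of_int 1) = B"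
          using f by (simp add: Qf)
        show "g / f * Q (\<theta> * real_of_int 1) (\<theta> * real_of_int 1) = g"
          using f by (simp add: Qf)
      qed
    qed
  next
    case False
    define G where "G = - g"
    have G: "G > 0" using False G_def by simp
    have "0 < g\<^sup>2" using False by simp
    then have "A * B > 0" using gAB by linarith
    then have AB: "A > 0" "B > 0" using A B
      by (auto simp: zero_less_mult_iff)
    have "G / A < B / G" using G AB gAB unfolding G_def by (simp add: field_simps power2_eq_square)
    then obtain r where r: "r \<in> \<rat>" "G / A < r" "r < B / G" using Rats_dense_in_real by blast
    obtain m k :: int where mk: "r = of_int m / of_int k" "k > 0"
      using r(1) by (metis Rats_cases')
    have rpos: "r > 0" using r G AB by (meson divide_pos_pos less_trans)
    then have m: "m > 0" using mk by (simp add: zero_less_divide_iff)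
    have k1: "G * k < m * A" using r(2) mk AB by (simp add: field_simps)
    have k2: "m * G < k * B" using r(3) mk G by (simp add: field_simps)
    define kr where "kr = real_of_int k"
    define mr where "mr = real_of_int m"
    have kr: "kr > 0" and mr: "mr > 0" using mk m by (auto simp: kr_def mr_def)
    have L2: "((\<lambda>t::real. ((cos (kr*t) - 1) * (cos (mr*t) - 1) - sin (kr*t) * sin (mr*t)) / t^2) \<longlongrightarrow> - kr*mr) (at_right 0)"
      using kr mr by real_asymp
    have L3: "((\<lambda>t::real. (G * (2 - 2*cos (kr*t)) + A * ((cos (kr*t) - 1) * (cos (mr*t) - 1) - sin (kr*t) * sin (mr*t))) / t^2) \<longlongrightarrow> G*kr*kr - A*kr*mr) (at_right 0)"
      using kr mr G AB by real_asymp
    have L4: "((\<lambda>t::real. (G * (2 - 2*cos (mr*t)) + B * ((cos (kr*t) - 1) * (cos (mr*t) - 1) - sin (kr*t) * sin (mr*t))) / t^2) \<longlongrightarrow> G*mr*mr - B*kr*mr) (at_right 0)"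
      using kr mr G AB by real_asymp
    have l3: "G*kr*kr - A*kr*mr < 0"
    proof -
      have "kr * (G*kr - A*mr) < 0" using kr k1 by (intro mult_pos_neg) (auto simp: kr_def mr_def algebra_simps)
      then show ?thesis by (simp add: algebra_simps)
    qed
    have l4: "G*mr*mr - B*kr*mr < 0"
    proof -
      have "mr * (G*mr - B*kr) < 0" using mr k2 by (intro mult_pos_neg) (auto simp: kr_def mr_def algebra_simps)
      then show ?thesis by (simp add: algebra_simps)
    qed
    have E: "eventually (\<lambda>t. (2 - 2*cos t) / t^2 > 0 \<and>
        ((cos (kr*t) - 1) * (cos (mr*t) - 1) - sin (kr*t) * sin (mr*t)) / t^2 < 0 \<and>
        (G * (2 - 2*cos (kr*t)) + A * ((cos (kr*t) - 1) * (cos (mr*t) - 1) - sin (kr*t) * sin (mr*t))) / t^2 < 0 \<and>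
        (G * (2 - 2*cos (mr*t)) + B * ((cos (kr*t) - 1) * (cos (mr*t) - 1) - sin (kr*t) * sin (mr*t))) / t^2 < 0)
        (at_right 0)"
    proof -
      have "- kr * mr < 0" using kr mr by simp
      note E2 = order_tendstoD(2)[OF L2 this]
      note E3 = order_tendstoD(2)[OF L3 l3]
      note E4 = order_tendstoD(2)[OF L4 l4]
      show ?thesis by (intro eventually_conj E1 E2 E3 E4)
    qed
    obtain N where N: "\<forall>p\<ge>N. (\<lambda>t. (2 - 2*cos t) / t^2 > 0 \<and>
        ((cos (kr*t) - 1) * (cos (mr*t) - 1) - sin (kr*t) * sin (mr*t)) / t^2 < 0 \<and>
        (G * (2 - 2*cos (kr*t)) + A * ((cos (kr*t) - 1) * (cos (mr*t) - 1) - sin (kr*t) * sin (mr*t))) / t^2 < 0 \<and>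
        (G * (2 - 2*cos (mr*t)) + B * ((cos (kr*t) - 1) * (cos (mr*t) - 1) - sin (kr*t) * sin (mr*t))) / t^2 < 0)
        (2 * pi / real p)"
      using ev_seq[OF E] by blast
    show ?thesis
    proof (intro exI[of _ "max N (max 2 (nat m + nat k + 1))"] allI impI conjI)
      fix p assume p: "max N (max 2 (nat m + nat k + 1)) \<le> p"
      then have "2 \<le> p" by (meson max.boundedE)
      then show "p > 1" by simp
      define \<theta> where "\<theta> = 2 * pi / real p"
      have pp: "real p > 0" using p by simp
      have pk0: "nat m + nat k + 1 \<le> p" using p by (meson max.boundedE)
      have pk: "m + k + 1 \<le> int p" using pk0 m mk by linarith
      define f where "f = 2 - 2 * cos \<theta>"
      define C where "C = (cos (kr*\<theta>) - 1) * (cos (mr*\<theta>) - 1) - sin (kr*\<theta>) * sin (mr*\<theta>)"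
      define X where "X = 2 - 2 * cos (kr * \<theta>)"
      define Y where "Y = 2 - 2 * cos (mr * \<theta>)"
      have "N \<le> p" using p by (meson max.boundedE)
      note NP = N[rule_format, OF this, unfolded \<theta>_def[symmetric]]
      have NN: "f > 0" "C < 0" "G * X + A * C < 0" "G * Y + B * C < 0"
        unfolding f_def C_def X_def Y_def
        using div_pos[OF conjunct1[OF NP]] div_neg[OF conjunct1[OF conjunct2[OF NP]]]
          div_neg[OF conjunct1[OF conjunct2[OF conjunct2[OF NP]]]] div_neg[OF conjunct2[OF conjunct2[OF conjunct2[OF NP]]]]
        by auto
      define e2 where "e2 = int p - m"
      have e2: "0 \<le> e2" "e2 < int p" using pk m mk unfolding e2_def by auto
      have the2: "\<theta> * real_of_int e2 = 2 * pi - mr * \<theta>"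
        unfolding e2_def \<theta>_def mr_def using pp by (simp add: field_simps)
      have Q1: "Q (\<theta> * real_of_int k) (\<theta> * real_of_int k) = X"
        unfolding Qdiag X_def kr_def by (simp add: mult.commute)
      have Q2: "Q (\<theta> * real_of_int e2) (\<theta> * real_of_int e2) = Y"
        unfolding Qdiag Y_def the2 cos_2pi_minus by simp
      have Q3: "Q (\<theta> * real_of_int k) (\<theta> * real_of_int e2) = C"
        unfolding Q_def C_def the2 cos_2pi_minus sin_2pi_minus kr_def by (simp add: algebra_simps)
      have Qf: "Q \<theta> \<theta> = f" unfolding f_def Qdiag ..
      have X0: "X \<ge> 0" unfolding X_def using cos_le_one[of "kr*\<theta>"] by linarith
      have Y0: "Y \<ge> 0" unfolding Y_def using cos_le_one[of "mr*\<theta>"] by linarith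
      define s where "s = g / C"
      have s: "s > 0" unfolding s_def using NN False by (simp add: divide_neg_neg)
      have sX: "s * X \<le> A"
      proof -
        have "s * X = G * X / (- C)" unfolding s_def G_def by (simp add: field_simps)
        also have "\<dots> \<le> A"
        proof -
          have "- C > 0" using NN by simp
          moreover have "G * X \<le> A * (- C)" using NN by simp
          ultimately show ?thesis by (simp only: pos_divide_le_eq)
        qed
        finally show ?thesis .
      qed
      have sY: "s * Y \<le> B"
      proof -
        have "s * Y = G * Y / (- C)" unfolding s_def G_def by (simp add: field_simps)
        also have "\<dots> \<le> B"
        proof -
          have "- C > 0" using NN by simp
          moreover have "G * Y \<le> B * (- C)" using NN by simp
          ultimately show ?thesis by (simp only: pos_divide_le_eq)
        qed
        finally show ?thesis .
      qed
      define r0 where "r0 = sqrt ((A - s * X) / f)"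
      define r1 where "r1 = sqrt ((B - s * Y) / f)"
      define r2 where "r2 = sqrt s"
      have rr: "r0\<^sup>2 = (A - s * X) / f" "r1\<^sup>2 = (B - s * Y) / f" "r2\<^sup>2 = s"
        unfolding r0_def r1_def r2_def using NN sX sY s
        by (simp_all add: real_sqrt_pow2 divide_nonneg_pos)
      show "\<exists>e1 e2 r0 r1 r2. 0 \<le> e1 \<and> e1 < int p \<and> 0 \<le> e2 \<and> e2 < int p \<and>
        r0\<^sup>2 * Q (2*pi/real p) (2*pi/real p) + r2\<^sup>2 * Q (2*pi/real p * e1) (2*pi/real p * e1) = A \<and>
        r1\<^sup>2 * Q (2*pi/real p) (2*pi/real p) + r2\<^sup>2 * Q (2*pi/real p * e2) (2*pi/real p * e2) = B \<and>
        r2\<^sup>2 * Q (2*pi/real p * e1) (2*pi/real p * e2) = g"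
        apply (rule exI[of _ k], rule exI[of _ e2], rule exI[of _ r0], rule exI[of _ r1], rule exI[of _ r2])
        unfolding \<theta>_def[symmetric] Q1 Q2 Q3 Qf rr
      proof (intro conjI)
        show "0 \<le> k" using mk by simp
        show "k < int p" using pk m by linarith
        show "0 \<le> e2" "e2 < int p" using e2 by auto
        show "(A - s * X) / f * f + s * X = A" using NN by simp
        show "(B - s * Y) / f * f + s * Y = B" using NN by simp
        show "s * C = g" unfolding s_def using NN by simp
      qed
    qed
  qed
qed

lemma collinear_from:
  assumes "\<And>i. b i - a i = s * z i" "\<And>i. c i - a i = t * z i"
  shows "collinear_pts {a, b, c}"
proof -
  have key: "\<forall>x\<in>{a,b,c}. \<exists>\<sigma>. \<forall>i. x i = a i + \<sigma> * z i"
  proof (intro ballI)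
    fix x assume "x \<in> {a,b,c}"
    then consider "x = a" | "x = b" | "x = c" by blast
    then show "\<exists>\<sigma>. \<forall>i. x i = a i + \<sigma> * z i"
    proof cases
      case 1 then show ?thesis by (intro exI[of _ 0]) simp
    next
      case 2 then show ?thesis using assms(1) by (intro exI[of _ s]) (metis add.commute diff_add_cancel)
    next
      case 3 then show ?thesis using assms(2) by (intro exI[of _ t]) (metis add.commute diff_add_cancel)
    qed
  qed
  show ?thesis unfolding collinear_pts_def
  proof (intro exI[of _ z] ballI)
    fix x y assume x: "x \<in> {a,b,c}" and y: "y \<in> {a,b,c}"
    obtain sx where sx: "\<forall>i. x i = a i + sx * z i" using key x by blast
    obtain sy where sy: "\<forall>i. y i = a i + sy * z i" using key y by blast
    show "\<exists>c. \<forall>i. x i - y i = c * z i"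
      by (intro exI[of _ "sx - sy"]) (simp add: sx sy algebra_simps)
  qed
qed

lemma strict_CS:
  fixes a b c :: "nat \<Rightarrow> real" and n :: nat
  assumes abc: "a \<in> Rn n" "b \<in> Rn n" "c \<in> Rn n" and nc: "\<not> collinear_pts {a, b, c}"
  shows "(ip n (\<lambda>i. b i - a i) (\<lambda>i. c i - a i))\<^sup>2 <
      ip n (\<lambda>i. b i - a i) (\<lambda>i. b i - a i) * ip n (\<lambda>i. c i - a i) (\<lambda>i. c i - a i)"
proof (rule ccontr)
  define u where "u = (\<lambda>i. b i - a i)"
  define v where "v = (\<lambda>i. c i - a i)"
  define A where "A = ip n u u"
  define B where "B = ip n v v"
  define g where "g = ip n u v"
  assume "\<not> ?thesis"
  then have le: "A * B \<le> g\<^sup>2" unfolding A_def B_def g_def u_def v_def by simp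
  have u: "u \<in> Rn n" unfolding u_def using abc by (auto simp: Rn_def)
  have v: "v \<in> Rn n" unfolding v_def using abc by (auto simp: Rn_def)
  show False
  proof (cases "A = 0")
    case True
    have "u = (\<lambda>i. 0)" using ip_zero[OF u] True A_def by simp
    then have "\<And>i. b i - a i = 0 * v i" "\<And>i. c i - a i = 1 * v i"
      unfolding u_def v_def by (auto simp: fun_eq_iff)
    then show False using nc collinear_from by blast
  next
    case False
    then have Apos: "A > 0" using ip_nonneg[of n u] A_def by simp
    define w where "w = (\<lambda>i. A * v i - g * u i)"
    have "ip n w w = A * (A * B - g\<^sup>2)"
      unfolding w_def ip_diff_left ip_diff_right ip_scale_left ip_scale_right
      by (simp add: A_def B_def g_def ip_sym power2_eq_square algebra_simps)
    also have "\<dots> \<le> 0" using Apos le by (simp add: mult_nonneg_nonpos)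
    finally have "ip n w w = 0" using ip_nonneg[of n w] by linarith
    moreover have "w \<in> Rn n" using u v unfolding w_def Rn_def by auto
    ultimately have "w = (\<lambda>i. 0)" using ip_zero by blast
    then have "\<And>i. A * v i - g * u i = 0" unfolding w_def by (metis (no_types))
    then have "\<And>i. v i = (g / A) * u i" using Apos by (simp add: field_simps)
    then have "\<And>i. b i - a i = 1 * u i" "\<And>i. c i - a i = (g / A) * u i"
      unfolding u_def v_def by auto
    then show False using nc collinear_from by blast
  qed
qed

lemma core:
  fixes a b c :: "nat \<Rightarrow> real" and d :: nat
  assumes abc: "a \<in> Rn d" "b \<in> Rn d" "c \<in> Rn d" and nc: "\<not> collinear_pts {a, b, c}"
    and ac1: "ip (d+6) (\<lambda>i. b i - a i) (\<lambda>i. c i - a i) < ip (d+6) (\<lambda>i. b i - a i) (\<lambda>i. b i - a i)"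
    and ac2: "ip (d+6) (\<lambda>i. b i - a i) (\<lambda>i. c i - a i) < ip (d+6) (\<lambda>i. c i - a i) (\<lambda>i. c i - a i)"
  shows "\<exists>p0. \<forall>p\<ge>p0. sub_p_toral p d {a, b, c}"
proof -
  have abc': "a \<in> Rn (d+6)" "b \<in> Rn (d+6)" "c \<in> Rn (d+6)" using abc Rn_mono by auto
  obtain p0 where p0: "\<forall>p\<ge>p0. p > 1 \<and> (\<exists>e1 e2 r0 r1 r2. 0 \<le> e1 \<and> e1 < int p \<and> 0 \<le> e2 \<and> e2 < int p \<and>
     r0\<^sup>2 * Q (2*pi/real p) (2*pi/real p) + r2\<^sup>2 * Q (2*pi/real p * e1) (2*pi/real p * e1) = ip (d+6) (\<lambda>i. b i - a i) (\<lambda>i. b i - a i) \<and>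
     r1\<^sup>2 * Q (2*pi/real p) (2*pi/real p) + r2\<^sup>2 * Q (2*pi/real p * e2) (2*pi/real p * e2) = ip (d+6) (\<lambda>i. c i - a i) (\<lambda>i. c i - a i) \<and>
     r2\<^sup>2 * Q (2*pi/real p * e1) (2*pi/real p * e2) = ip (d+6) (\<lambda>i. b i - a i) (\<lambda>i. c i - a i))"
    using numeric[OF ip_nonneg ip_nonneg ac1 ac2 strict_CS[OF abc' nc]] by blast
  show ?thesis
  proof (intro exI[of _ p0] allI impI)
    fix p assume "p0 \<le> p"
    then obtain e1 e2 r0 r1 r2 where "p > 1" and H: "0 \<le> e1" "e1 < int p" "0 \<le> e2" "e2 < int p"
     "r0\<^sup>2 * Q (2*pi/real p) (2*pi/real p) + r2\<^sup>2 * Q (2*pi/real p * e1) (2*pi/real p * e1) = ip (d+6) (\<lambda>i. b i - a i) (\<lambda>i. b i - a i)"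
     "r1\<^sup>2 * Q (2*pi/real p) (2*pi/real p) + r2\<^sup>2 * Q (2*pi/real p * e2) (2*pi/real p * e2) = ip (d+6) (\<lambda>i. c i - a i) (\<lambda>i. c i - a i)"
     "r2\<^sup>2 * Q (2*pi/real p * e1) (2*pi/real p * e2) = ip (d+6) (\<lambda>i. b i - a i) (\<lambda>i. c i - a i)"
      using p0 by blast
    show "sub_p_toral p d {a, b, c}"
      by (rule model2[OF \<open>p > 1\<close> abc H])
  qed
qed

lemma sum_comb: "(\<Sum>i<n. f i) + (\<Sum>i<n. g i) - 2 * (\<Sum>i<n. h i) = (\<Sum>i<n. f i + g i - 2 * h i :: real)"
  by (simp add: sum.distrib sum_subtractf sum_distrib_left)

lemma ip_expansions:
  fixes a b c :: "nat \<Rightarrow> real"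
  shows "ip n (\<lambda>i. a i - b i) (\<lambda>i. a i - b i) = ip n (\<lambda>i. b i - a i) (\<lambda>i. b i - a i)"
    and "ip n (\<lambda>i. a i - b i) (\<lambda>i. c i - b i) = ip n (\<lambda>i. b i - a i) (\<lambda>i. b i - a i) - ip n (\<lambda>i. b i - a i) (\<lambda>i. c i - a i)"
    and "ip n (\<lambda>i. c i - b i) (\<lambda>i. c i - b i) = ip n (\<lambda>i. b i - a i) (\<lambda>i. b i - a i) + ip n (\<lambda>i. c i - a i) (\<lambda>i. c i - a i) - 2 * ip n (\<lambda>i. b i - a i) (\<lambda>i. c i - a i)"
    and "ip n (\<lambda>i. a i - c i) (\<lambda>i. a i - c i) = ip n (\<lambda>i. c i - a i) (\<lambda>i. c i - a i)"
    and "ip n (\<lambda>i. a i - c i) (\<lambda>i. b i - c i) = ip n (\<lambda>i. c i - a i) (\<lambda>i. c i - a i) - ip n (\<lambda>i. b i - a i) (\<lambda>i. c i - a i)"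
    and "ip n (\<lambda>i. b i - c i) (\<lambda>i. b i - c i) = ip n (\<lambda>i. b i - a i) (\<lambda>i. b i - a i) + ip n (\<lambda>i. c i - a i) (\<lambda>i. c i - a i) - 2 * ip n (\<lambda>i. b i - a i) (\<lambda>i. c i - a i)"
  unfolding ip_def sum_comb sum_subtractf[symmetric]
  by (rule sum.cong; simp add: algebra_simps)+

theorem theorem4:
  fixes k :: nat and a b c :: "nat \<Rightarrow> real"
  assumes "a \<in> Rn k" "b \<in> Rn k" "c \<in> Rn k"
    and "\<not> collinear_pts {a, b, c}"
  shows "\<exists>p0::nat. \<forall>p::nat. prime p \<and> p \<ge> p0 \<longrightarrow> sub_p_toral p k {a, b, c}"
proof -
  let ?n = "k + 6"
  define P where "P = ip ?n (\<lambda>i. b i - a i) (\<lambda>i. b i - a i)"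
  define R where "R = ip ?n (\<lambda>i. c i - a i) (\<lambda>i. c i - a i)"
  define g where "g = ip ?n (\<lambda>i. b i - a i) (\<lambda>i. c i - a i)"
  have abc': "a \<in> Rn ?n" "b \<in> Rn ?n" "c \<in> Rn ?n" using assms Rn_mono by auto
  have CS: "g\<^sup>2 < P * R" using strict_CS[OF abc' assms(4)] unfolding P_def R_def g_def .
  have P0: "P \<ge> 0" "R \<ge> 0" unfolding P_def R_def by (rule ip_nonneg)+
  have Ppos: "P > 0"
  proof (rule ccontr)
    assume "\<not> P > 0" then have "P = 0" using P0 by simp
    then show False using CS by (simp add: power2_eq_square)
  qed
  have Rpos: "R > 0"
  proof (rule ccontr)
    assume "\<not> R > 0" then have "R = 0" using P0 by simp
    then show False using CS by (simp add: power2_eq_square)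
  qed
  have S1: "{b, a, c} = {a, b, c}" and S2: "{c, a, b} = {a, b, c}" by auto
  have E: "ip ?n (\<lambda>i. a i - b i) (\<lambda>i. a i - b i) = P"
    "ip ?n (\<lambda>i. a i - b i) (\<lambda>i. c i - b i) = P - g"
    "ip ?n (\<lambda>i. c i - b i) (\<lambda>i. c i - b i) = P + R - 2 * g"
    "ip ?n (\<lambda>i. a i - c i) (\<lambda>i. a i - c i) = R"
    "ip ?n (\<lambda>i. a i - c i) (\<lambda>i. b i - c i) = R - g"
    "ip ?n (\<lambda>i. b i - c i) (\<lambda>i. b i - c i) = P + R - 2 * g"
    unfolding P_def R_def g_def by (rule ip_expansions)+
  have "\<exists>p0. \<forall>p\<ge>p0. sub_p_toral p k {a, b, c}"
  proof (cases "g < P \<and> g < R")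
    case True
    then show ?thesis using core[OF assms] unfolding P_def R_def g_def by blast
  next
    case False
    show ?thesis
    proof (cases "P \<le> g")
      case True
      then have gpos: "g > 0" using Ppos by simp
      have "P * R \<le> g * R" using True P0 by (simp add: mult_right_mono)
      then have "g * g < g * R" using CS by (simp add: power2_eq_square)
      then have gR: "g < R" using gpos by simp
      have "\<exists>p0. \<forall>p\<ge>p0. sub_p_toral p k {b, a, c}"
        by (rule core[OF assms(2,1,3)]) (use assms(4) S1 E gpos gR in auto)
      then show ?thesis using S1 by simp
    next
      case False
      then have gP: "g < P" by simp
      then have RG: "R \<le> g" using \<open>\<not> (g < P \<and> g < R)\<close> by simp
      then have gpos: "g > 0" using Rpos by simp
      have "g < P" by fact
      have "\<exists>p0. \<forall>p\<ge>p0. sub_p_toral p k {c, a, b}"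
        by (rule core[OF assms(3,1,2)]) (use assms(4) S2 E gpos gP in auto)
      then show ?thesis using S2 by simp
    qed
  qed
  then obtain p0 where "\<forall>p\<ge>p0. sub_p_toral p k {a, b, c}" by blast
  then show ?thesis by blast
qed

end
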